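(* Let $\mathcal X\subseteq[0,1]$ be a Borel set with $0,1\in\mathcal X$, fix $\mu\in(0,1)$, and let $\mathcal H_\mu=\{P\in\mathcal P_{\mathcal X}:\mathbb E_P[X]=\mu\}$. Define $F_\mu:\mathcal X\to[1,+\infty)$ by $F_\mu(x)=1+\frac1\mu(x-\mu)$ if $x\ge\mu$ and $F_\mu(x)=1+\frac1{\mu-1}(x-\mu)$ if $x<\mu$. Then for any $x\in\mathcal X$ there is $P_x\in\mathcal H_\mu$ such that $P_x(\{x\})=1/F_\mu(x)>0$. Moreover, $F_\mu(x)\ge E(x)$ for all $x\in\mathcal X$ and every e-variable $E$ for $\mathcal H_\mu$.
   Context: $\mathcal P_{\mathcal X}$ is the set of Borel probability measures on $\mathcal X$. An e-variable for $\mathcal H_\mu$ is a Borel $E:\mathcal X\to[0,+\infty)$ with $\mathbb E_P[E]\le1$ for all $P\in\mathcal H_\mu$. *)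

theory Defs
  imports "HOL-Probability.Probability"
begin

definition prob_measures_on :: "real set \<Rightarrow> real measure set" where
  "prob_measures_on Xs = {P. prob_space P \<and> space P = Xs \<and>
      sets P = sets (restrict_space borel Xs)}"

definition H_mu :: "real set \<Rightarrow> real \<Rightarrow> real measure set" where
  "H_mu Xs mu = {P \<in> prob_measures_on Xs.
      integrable P (\<lambda>x. x) \<and> (\<integral>x. x \<partial>P) = mu}"

definition e_variable :: "real set \<Rightarrow> real measure set \<Rightarrow> (real \<Rightarrow> real) \<Rightarrow> bool" where
  "e_variable Xs H E \<longleftrightarrow> E \<in> borel_measurable (restrict_space borel Xs) \<and>
      (\<forall>x\<in>Xs. 0 \<le> E x) \<and>
      (\<forall>P\<in>H. (\<integral>\<^sup>+ x. ennreal (E x) \<partial>P) \<le> 1)"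

definition F_mu :: "real \<Rightarrow> real \<Rightarrow> real" where
  "F_mu mu x = (if x \<ge> mu then 1 + (1 / mu) * (x - mu) else 1 + (1 / (mu - 1)) * (x - mu))"

end

theory Submission imports Defs begin

lemma two_point:
  fixes Xs :: "real set" and x y p :: real
  assumes "x \<in> Xs" "y \<in> Xs" "x \<noteq> y" "0 \<le> p" "p \<le> 1"
  shows "\<exists>P\<in>prob_measures_on Xs. integrable P (\<lambda>z. z) \<and> (\<integral>z. z \<partial>P) = p * x + (1 - p) * y
          \<and> measure P {x} = p"
proof -
  define q where "q = map_pmf (\<lambda>b. if b then x else y) (bernoulli_pmf p)"
  define f where "f z = (if z \<in> Xs then z else x)" for z
  define M where "M = restrict_space borel Xs"
  define P where "P = distr (measure_pmf q) M f"
  have sq: "set_pmf q \<subseteq> {x, y}" unfolding q_def by auto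
  have v1: "(\<lambda>b. if b then x else y) -` {x} = {True}" using assms by (auto split: if_splits)
  have v2: "(\<lambda>b. if b then x else y) -` {y} = {False}" using assms by (auto split: if_splits)
  have px: "pmf q x = p" unfolding q_def pmf_map v1 using assms
    by (simp add: measure_pmf_single)
  have py: "pmf q y = 1 - p" unfolding q_def pmf_map v2 using assms
    by (simp add: measure_pmf_single)
  have spM: "space M = Xs" unfolding M_def by (simp add: space_restrict_space)
  have fm: "f \<in> measurable (measure_pmf q) M" using spM assms unfolding f_def by auto
  have ps: "prob_space P" unfolding P_def
    by (rule measure_pmf.prob_space_distr[OF fm])
  have "P \<in> prob_measures_on Xs" unfolding prob_measures_on_def P_def using ps spM
    by (simp add: P_def M_def)
  moreover have "integrable P (\<lambda>z. z)" unfolding P_def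
    by (subst integrable_distr_eq[OF fm]) (auto simp: M_def intro!: integrable_measure_pmf_finite
         measurable_restrict_space1 intro: finite_subset[OF sq])
  moreover have "(\<integral>z. z \<partial>P) = p * x + (1 - p) * y"
  proof -
    have "(\<integral>z. z \<partial>P) = (\<integral>z. f z \<partial>measure_pmf q)" unfolding P_def
      by (rule integral_distr[OF fm]) (auto simp: M_def intro!: measurable_restrict_space1)
    also have "\<dots> = (\<Sum>a\<in>{x,y}. pmf q a *\<^sub>R f a)"
      by (rule integral_measure_pmf) (use sq in auto)
    also have "\<dots> = p * x + (1 - p) * y" using assms px py by (simp add: f_def)
    finally show ?thesis .
  qed
  moreover have "measure P {x} = p"
  proof -
    have xs: "{x} \<in> sets M" unfolding M_def using assms
      by (auto simp: sets_restrict_space image_iff intro!: bexI[of _ "{x}"])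
    have "measure P {x} = measure q (f -` {x} \<inter> space (measure_pmf q))" unfolding P_def
      by (rule measure_distr[OF fm xs])
    also have "\<dots> = measure q ((f -` {x}) \<inter> set_pmf q)" by (simp add: measure_Int_set_pmf)
    also have "(f -` {x}) \<inter> set_pmf q = {x} \<inter> set_pmf q" using sq assms by (auto simp: f_def)
    also have "measure q \<dots> = measure q {x}" by (simp add: measure_Int_set_pmf)
    also have "\<dots> = p" using px by (simp add: measure_pmf_single)
    finally show ?thesis .
  qed
  ultimately show ?thesis by blast
qed

lemma part1:
  fixes Xs :: "real set" and mu :: real
  assumes "Xs \<subseteq> {0..1}" and "0 \<in> Xs" and "1 \<in> Xs"
    and "0 < mu" and "mu < 1" and x: "x \<in> Xs"
  shows "\<exists>P\<in>H_mu Xs mu. measure P {x} = 1 / F_mu mu x \<and> 1 / F_mu mu x > 0"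
proof (cases "x \<ge> mu")
  case True
  have x0: "x > 0" using True assms by linarith
  have F: "1 / F_mu mu x = mu / x" unfolding F_mu_def using True x0 assms
    by (simp add: field_simps)
  obtain P where P: "P \<in> prob_measures_on Xs" "integrable P (\<lambda>z. z)"
    "(\<integral>z. z \<partial>P) = (mu/x) * x + (1 - mu/x) * 0" "measure P {x} = mu/x"
    using two_point[of x Xs 0 "mu/x"] x assms x0 True by auto
  have "(\<integral>z. z \<partial>P) = mu" using P(3) x0 by simp
  then show ?thesis using P x0 assms by (auto simp: H_mu_def F intro!: bexI[of _ P])
next
  case False
  have x1: "x < 1" using False assms by linarith
  have F: "1 / F_mu mu x = (1 - mu) / (1 - x)" unfolding F_mu_def using False x1 assms
    by (simp add: field_simps)
  have p1: "(1 - mu) / (1 - x) \<le> 1" using False x1 by (simp add: field_simps)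
  have p0: "(1 - mu) / (1 - x) > 0" using x1 assms by simp
  obtain P where P: "P \<in> prob_measures_on Xs" "integrable P (\<lambda>z. z)"
    "(\<integral>z. z \<partial>P) = ((1 - mu) / (1 - x)) * x + (1 - (1 - mu) / (1 - x)) * 1"
    "measure P {x} = (1 - mu) / (1 - x)"
    using two_point[of x Xs 1 "(1 - mu) / (1 - x)"] x assms x1 p1 p0 by auto
  define p where "p = (1 - mu) / (1 - x)"
  have m: "p * (1 - x) = 1 - mu" using x1 by (simp add: p_def)
  have "(\<integral>z. z \<partial>P) = 1 - p * (1 - x)" using P(3) unfolding p_def[symmetric]
    by (simp add: algebra_simps)
  then have "(\<integral>z. z \<partial>P) = mu" using m by simp
  then show ?thesis using P p0 by (auto simp: H_mu_def F intro!: bexI[of _ P])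
qed

theorem lemma3:
  fixes Xs :: "real set" and mu :: real
  assumes "Xs \<in> sets borel" and "Xs \<subseteq> {0..1}" and "0 \<in> Xs" and "1 \<in> Xs"
    and "0 < mu" and "mu < 1"
  shows "(\<forall>x\<in>Xs. \<exists>P\<in>H_mu Xs mu. measure P {x} = 1 / F_mu mu x \<and> 1 / F_mu mu x > 0)
       \<and> (\<forall>E. e_variable Xs (H_mu Xs mu) E \<longrightarrow> (\<forall>x\<in>Xs. F_mu mu x \<ge> E x))"
proof (intro conjI allI impI ballI)
  fix x assume "x \<in> Xs"
  then show "\<exists>P\<in>H_mu Xs mu. measure P {x} = 1 / F_mu mu x \<and> 1 / F_mu mu x > 0"
    using part1 assms by blast
next
  fix E x assume E: "e_variable Xs (H_mu Xs mu) E" and x: "x \<in> Xs"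
  obtain P where P: "P \<in> H_mu Xs mu" "measure P {x} = 1 / F_mu mu x" "1 / F_mu mu x > 0"
    using part1 assms x by blast
  have ps: "prob_space P" and sp: "space P = Xs" using P(1) by (auto simp: H_mu_def prob_measures_on_def)
  have Ex: "0 \<le> E x" using E x by (auto simp: e_variable_def)
  have le1: "(\<integral>\<^sup>+ z. ennreal (E z) \<partial>P) \<le> 1" using E P(1) by (auto simp: e_variable_def)
  have "(\<integral>\<^sup>+ z. ennreal (E x) * indicator {x} z \<partial>P) \<le> (\<integral>\<^sup>+ z. ennreal (E z) \<partial>P)"
    by (rule nn_integral_mono) (auto simp: indicator_def)
  moreover have xs: "{x} \<in> sets P" using P(1) x
    by (auto simp: H_mu_def prob_measures_on_def sets_restrict_space image_iff intro!: bexI[of _ "{x}"])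
  moreover have "(\<integral>\<^sup>+ z. ennreal (E x) * indicator {x} z \<partial>P) = ennreal (E x) * emeasure P {x}"
    using xs by (rule nn_integral_cmult_indicator)
  moreover have "emeasure P {x} = ennreal (1 / F_mu mu x)"
  proof -
    interpret prob_space P by (rule ps)
    show ?thesis using emeasure_eq_measure P(2) by simp
  qed
  ultimately have "ennreal (E x) * ennreal (1 / F_mu mu x) \<le> 1" using le1
    by (metis order_trans)
  then have "ennreal (E x * (1 / F_mu mu x)) \<le> 1" using Ex P(3)
    by (subst ennreal_mult) auto
  then have "E x * (1 / F_mu mu x) \<le> 1" by (simp add: ennreal_le_1)
  then show "F_mu mu x \<ge> E x" using P(3) by (simp add: field_simps)
qed

end
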